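(* Let $\mathcal V$ be a finite-dimensional Euclidean space, consider linear losses $f_t(x)=\langle g_t,x\rangle$ and uniform delay $\tau$, i.e. $\mathcal S_t=\{1,\dots,t-\tau-1\}$ for all $t$. Run DODA with guesses $\tilde g_{t+1/2}=g_{t-\tau-1}$ and constant learning rates $\eta=r/\sqrt{(2\tau+1)V^{\tau+1}_T}$, $\gamma=(2\tau+1)\eta$, where $r\ge\|p-x_1\|$ and $V^{\tau+1}_T>0$. Then \[R_T(p)\le r\sqrt{(2\tau+1)V^{\tau+1}_T}.\]
   Context: DODA (unconstrained Euclidean): given $x_1\in\mathcal V$, $x_t=x_1-\eta_t\sum_{s\in\mathcal S_t}g_{s+1/2}$ and $x_{t+1/2}=x_t-\gamma_t\tilde g_{t+1/2}$; the played point at round $t$ is $x_{t+1/2}$, with feedback $g_{t+1/2}=\nabla f_t(x_{t+1/2})$, which for linear losses equals $g_t$. Regret: $R_T(p)=\sum_{t=1}^Tf_t(x_{t+1/2})-\sum_{t=1}^Tf_t(p)$. Convention $g_t=0$ for $t\le0$. The $(\tau+1)$-variation is $V^{\tau+1}_T=\sum_{t=1}^T\|g_t-g_{t-\tau-1}\|^2$. *)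

theory Defs
  imports "HOL-Analysis.Analysis"
begin

text \<open>Losses are linear, f_t(x) = <g t, x>, for rounds t = 1,2,...; the value g 0 is never
  used. The convention g_t = 0 for t \<le> 0 is encoded by the delayed sequence below.\<close>

definition delayed_grad :: "(nat \<Rightarrow> 'a::real_vector) \<Rightarrow> nat \<Rightarrow> nat \<Rightarrow> 'a" where
  "delayed_grad g \<tau> t = (if t > \<tau> + 1 then g (t - \<tau> - 1) else 0)"

definition doda_x :: "'a::real_vector \<Rightarrow> real \<Rightarrow> (nat \<Rightarrow> 'a) \<Rightarrow> nat \<Rightarrow> nat \<Rightarrow> 'a" where
  "doda_x x1 \<eta> g \<tau> t = x1 - \<eta> *\<^sub>R (\<Sum>s\<in>{s. 1 \<le> s \<and> s + \<tau> + 1 \<le> t}. g s)"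

definition doda_xhalf :: "'a::real_vector \<Rightarrow> real \<Rightarrow> real \<Rightarrow> (nat \<Rightarrow> 'a) \<Rightarrow> nat \<Rightarrow> nat \<Rightarrow> 'a" where
  "doda_xhalf x1 \<eta> \<gamma> g \<tau> t = doda_x x1 \<eta> g \<tau> t - \<gamma> *\<^sub>R delayed_grad g \<tau> t"

definition regret :: "'a::real_inner \<Rightarrow> real \<Rightarrow> real \<Rightarrow> (nat \<Rightarrow> 'a) \<Rightarrow> nat \<Rightarrow> nat \<Rightarrow> 'a \<Rightarrow> real" where
  "regret x1 \<eta> \<gamma> g \<tau> T p =
     (\<Sum>t=1..T. inner (g t) (doda_xhalf x1 \<eta> \<gamma> g \<tau> t)) - (\<Sum>t=1..T. inner (g t) p)"

definition variation :: "(nat \<Rightarrow> 'a::real_normed_vector) \<Rightarrow> nat \<Rightarrow> nat \<Rightarrow> real" where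
  "variation g \<tau> T = (\<Sum>t=1..T. (norm (g t - delayed_grad g \<tau> t))\<^sup>2)"

end

theory Submission
  imports Defs
begin

lemma norm_sum_sq:
  fixes g :: "nat \<Rightarrow> 'a::real_inner"
  shows "(norm (\<Sum>t=1..T. g t))\<^sup>2 = (\<Sum>t=1..T. (norm (g t))\<^sup>2 + 2 * inner (g t) (\<Sum>s\<in>{1..<t}. g s))"
proof (induction T)
  case 0 then show ?case by simp
next
  case (Suc T)
  have e: "{1..<Suc T} = {1..T}" by auto
  have "(norm (\<Sum>t=1..Suc T. g t))\<^sup>2 = (norm ((\<Sum>t=1..T. g t) + g (Suc T)))\<^sup>2"
    by simp
  also have "\<dots> = (norm (\<Sum>t=1..T. g t))\<^sup>2 + (norm (g (Suc T)))\<^sup>2 + 2 * inner (g (Suc T)) (\<Sum>t=1..T. g t)"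
    by (simp add: power2_norm_eq_inner inner_add_left inner_add_right inner_commute)
  finally show ?case using Suc e by simp
qed

lemma cross_bound:
  fixes g :: "nat \<Rightarrow> 'a::real_inner"
  shows "(\<Sum>t=1..T. (norm (g t))\<^sup>2 + 2 * inner (g t) (\<Sum>s\<in>{s\<in>{1..<t}. t \<le> s + \<tau>}. g s))
     \<le> (2 * real \<tau> + 1) * (\<Sum>t=1..T. (norm (g t))\<^sup>2)"
proof -
  define W where "W t = {s\<in>{1..T}. s < t \<and> t \<le> s + \<tau>}" for t
  have WW: "t \<in> {1..T} \<Longrightarrow> {s\<in>{1..<t}. t \<le> s + \<tau>} = W t" for t
    unfolding W_def by auto
  have cW: "card (W t) \<le> \<tau>" for t
  proof -
    have "W t \<subseteq> {t-\<tau>..<t}" unfolding W_def by auto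
    then have "card (W t) \<le> card {t-\<tau>..<t}" by (intro card_mono) auto
    then show ?thesis by simp
  qed
  have c2: "card {t\<in>{1..T}. s < t \<and> t \<le> s + \<tau>} \<le> \<tau>" for s
  proof -
    have "{t\<in>{1..T}. s < t \<and> t \<le> s + \<tau>} \<subseteq> {s<..s+\<tau>}" by auto
    then have "card {t\<in>{1..T}. s < t \<and> t \<le> s + \<tau>} \<le> card {s<..s+\<tau>}" by (intro card_mono) auto
    then show ?thesis by simp
  qed
  have pt: "2 * inner (g t) (\<Sum>s\<in>W t. g s) \<le> (\<Sum>s\<in>W t. (norm (g t))\<^sup>2 + (norm (g s))\<^sup>2)" for t
  proof -
    have "2 * inner (g t) (\<Sum>s\<in>W t. g s) = (\<Sum>s\<in>W t. 2 * inner (g t) (g s))"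
      by (simp add: inner_sum_right sum_distrib_left)
    also have "\<dots> \<le> (\<Sum>s\<in>W t. (norm (g t))\<^sup>2 + (norm (g s))\<^sup>2)"
    proof (rule sum_mono)
      fix s
      have "0 \<le> (norm (g t - g s))\<^sup>2" by simp
      then show "2 * inner (g t) (g s) \<le> (norm (g t))\<^sup>2 + (norm (g s))\<^sup>2"
        by (simp add: power2_norm_eq_inner inner_diff_left inner_diff_right inner_commute)
    qed
    finally show ?thesis .
  qed
  have s1: "(\<Sum>t=1..T. (\<Sum>s\<in>W t. (norm (g t))\<^sup>2)) \<le> (\<Sum>t=1..T. real \<tau> * (norm (g t))\<^sup>2)"
  proof (rule sum_mono)
    fix t
    show "(\<Sum>s\<in>W t. (norm (g t))\<^sup>2) \<le> real \<tau> * (norm (g t))\<^sup>2"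
      using cW[of t] by (simp add: mult_right_mono)
  qed
  have swap: "(\<Sum>t=1..T. (\<Sum>s\<in>W t. (norm (g s))\<^sup>2))
      = (\<Sum>s=1..T. (\<Sum>t\<in>{t\<in>{1..T}. s < t \<and> t \<le> s + \<tau>}. (norm (g s))\<^sup>2))"
    unfolding W_def by (rule sum.swap_restrict) auto
  have s2: "(\<Sum>s=1..T. (\<Sum>t\<in>{t\<in>{1..T}. s < t \<and> t \<le> s + \<tau>}. (norm (g s))\<^sup>2)) \<le> (\<Sum>s=1..T. real \<tau> * (norm (g s))\<^sup>2)"
  proof (rule sum_mono)
    fix s
    show "(\<Sum>t\<in>{t\<in>{1..T}. s < t \<and> t \<le> s + \<tau>}. (norm (g s))\<^sup>2) \<le> real \<tau> * (norm (g s))\<^sup>2"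
      using c2[of s] by (simp add: mult_right_mono)
  qed
  have "(\<Sum>t=1..T. (norm (g t))\<^sup>2 + 2 * inner (g t) (\<Sum>s\<in>{s\<in>{1..<t}. t \<le> s + \<tau>}. g s))
      = (\<Sum>t=1..T. (norm (g t))\<^sup>2 + 2 * inner (g t) (\<Sum>s\<in>W t. g s))"
    by (rule sum.cong) (simp_all only: WW)
  also have "\<dots> \<le> (\<Sum>t=1..T. (norm (g t))\<^sup>2 + (\<Sum>s\<in>W t. (norm (g t))\<^sup>2 + (norm (g s))\<^sup>2))"
    by (rule sum_mono) (use pt in auto)
  also have "\<dots> = (\<Sum>t=1..T. (norm (g t))\<^sup>2) + (\<Sum>t=1..T. (\<Sum>s\<in>W t. (norm (g t))\<^sup>2))
        + (\<Sum>t=1..T. (\<Sum>s\<in>W t. (norm (g s))\<^sup>2))"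
    by (simp add: sum.distrib)
  also have "\<dots> \<le> (\<Sum>t=1..T. (norm (g t))\<^sup>2) + (\<Sum>t=1..T. real \<tau> * (norm (g t))\<^sup>2)
        + (\<Sum>s=1..T. real \<tau> * (norm (g s))\<^sup>2)"
    using s1 s2 swap by linarith
  also have "\<dots> = (2 * real \<tau> + 1) * (\<Sum>t=1..T. (norm (g t))\<^sup>2)"
    by (simp add: sum_distrib_left[symmetric] algebra_simps)
  finally show ?thesis .
qed

theorem corollary2:
  fixes g :: "nat \<Rightarrow> 'a::euclidean_space" and x1 p :: 'a
    and \<tau> T :: nat and r \<eta> \<gamma> :: real
  assumes "norm (p - x1) \<le> r"
    and "variation g \<tau> T > 0"
    and "\<eta> = r / sqrt ((2 * real \<tau> + 1) * variation g \<tau> T)"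
    and "\<gamma> = (2 * real \<tau> + 1) * \<eta>"
  shows "regret x1 \<eta> \<gamma> g \<tau> T p \<le> r * sqrt ((2 * real \<tau> + 1) * variation g \<tau> T)"
proof -
  define A where "A t = {s. 1 \<le> s \<and> s + \<tau> + 1 \<le> t}" for t :: nat
  define h where "h t = delayed_grad g \<tau> t" for t
  define G where "G = (\<Sum>t=1..T. g t)"
  define Q where "Q = (\<Sum>t=1..T. inner (g t) (\<Sum>s\<in>A t. g s))"
  define C where "C = (\<Sum>t=1..T. inner (g t) (h t))"
  define N where "N = (\<Sum>t=1..T. (norm (g t))\<^sup>2)"
  define H where "H = (\<Sum>t=1..T. (norm (h t))\<^sup>2)"
  define V where "V = variation g \<tau> T"
  define K where "K = 2 * real \<tau> + 1"
  define S where "S = sqrt (K * V)"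
  have Vpos: "V > 0" using assms(2) V_def by simp
  have Kpos: "K > 0" using K_def by simp
  have Spos: "S > 0" using Vpos Kpos S_def by simp
  have S2: "S\<^sup>2 = K * V" using Vpos Kpos S_def by simp
  have r0: "r \<ge> 0" using assms(1) norm_ge_zero order_trans by blast
  have eta: "\<eta> = r / S" using assms(3) S_def K_def V_def by simp
  have eta0: "\<eta> \<ge> 0" using eta r0 Spos by simp
  have gam: "\<gamma> = K * \<eta>" using assms(4) K_def by simp
  have H0: "H \<ge> 0" unfolding H_def by (simp add: sum_nonneg)
  have reg: "regret x1 \<eta> \<gamma> g \<tau> T p = inner G (x1 - p) - \<eta> * Q - \<gamma> * C"
    unfolding regret_def doda_xhalf_def doda_x_def G_def Q_def C_def h_def A_def
    by (simp add: inner_diff_right inner_sum_left sum_subtractf sum_distrib_left sum.distrib)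
  have VC: "V = N + H - 2 * C"
    unfolding V_def variation_def N_def H_def C_def h_def
    by (simp add: power2_norm_eq_inner inner_diff_left inner_diff_right inner_commute
        sum_subtractf sum.distrib sum_distrib_left algebra_simps)
  have split: "(\<Sum>s\<in>{1..<t}. g s) = (\<Sum>s\<in>A t. g s) + (\<Sum>s\<in>{s\<in>{1..<t}. t \<le> s + \<tau>}. g s)" for t
  proof -
    have "{1..<t} = A t \<union> {s\<in>{1..<t}. t \<le> s + \<tau>}" unfolding A_def by auto
    moreover have "A t \<inter> {s\<in>{1..<t}. t \<le> s + \<tau>} = {}" unfolding A_def by auto
    moreover have "finite (A t)" unfolding A_def by (rule finite_subset[of _ "{..t}"]) auto
    moreover have "finite {s\<in>{1..<t}. t \<le> s + \<tau>}" by simp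
    ultimately show ?thesis by (metis sum.union_disjoint)
  qed
  have GQ: "(norm G)\<^sup>2 - 2 * Q \<le> K * N"
  proof -
    have "(norm G)\<^sup>2 = (\<Sum>t=1..T. (norm (g t))\<^sup>2 + 2 * inner (g t) (\<Sum>s\<in>{1..<t}. g s))"
      unfolding G_def by (rule norm_sum_sq)
    also have "\<dots> = 2 * Q + (\<Sum>t=1..T. (norm (g t))\<^sup>2 + 2 * inner (g t) (\<Sum>s\<in>{s\<in>{1..<t}. t \<le> s + \<tau>}. g s))"
      unfolding Q_def split by (simp add: inner_add_right sum.distrib sum_distrib_left algebra_simps)
    finally show ?thesis using cross_bound[of g \<tau> T] unfolding K_def N_def by linarith
  qed
  have CS: "inner G (x1 - p) \<le> norm G * r"
  proof -
    have "inner G (x1 - p) \<le> norm G * norm (x1 - p)" by (rule norm_cauchy_schwarz)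
    also have "\<dots> \<le> norm G * r" using assms(1) by (simp add: norm_minus_commute mult_left_mono)
    finally show ?thesis .
  qed
  have low: "\<eta> * Q + \<gamma> * C \<ge> \<eta> / 2 * ((norm G)\<^sup>2 - S\<^sup>2)"
  proof -
    have "Q + K * C \<ge> ((norm G)\<^sup>2 - K * V) / 2"
    proof -
      have C1: "C = N / 2 + H / 2 - V / 2" using VC by linarith
      have C2: "K * C = K * N / 2 + K * H / 2 - K * V / 2" unfolding C1 by (simp add: algebra_simps)
      have "K * H \<ge> 0" using H0 Kpos by simp
      then show ?thesis using GQ C2 by (simp add: field_simps)
    qed
    then have "\<eta> * (Q + K * C) \<ge> \<eta> * (((norm G)\<^sup>2 - K * V) / 2)"
      using eta0 by (rule mult_left_mono)
    then show ?thesis using S2 gam by (simp add: algebra_simps)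
  qed
  have fin: "norm G * r - r / S / 2 * ((norm G)\<^sup>2 - S\<^sup>2) \<le> r * S"
  proof -
    have "r * S - (norm G * r - r / S / 2 * ((norm G)\<^sup>2 - S\<^sup>2)) = r / S / 2 * (norm G - S)\<^sup>2"
      using Spos by (simp add: field_simps power2_eq_square)
    moreover have "r / S / 2 * (norm G - S)\<^sup>2 \<ge> 0" using r0 Spos by simp
    ultimately show ?thesis by linarith
  qed
  have "regret x1 \<eta> \<gamma> g \<tau> T p \<le> r * S"
  proof -
    have "\<eta> / 2 * ((norm G)\<^sup>2 - S\<^sup>2) = r / S / 2 * ((norm G)\<^sup>2 - S\<^sup>2)" using eta by simp
    then show ?thesis using reg CS low fin by linarith
  qed
  then show ?thesis unfolding S_def K_def V_def .
qed

end
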